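(* There is a quantum communication protocol of cost $O(\log N)$ in the one-clean-qubit model for the $\mathsf{ABCD}$ problem on $N\times N$ matrices such that every \textsc{yes} instance is accepted (output 1) with probability at least $0.95$ and every \textsc{no} instance is accepted with probability at most $0.55$.
   Context: Throughout, $N=2^n$ for a positive integer $n$, and $\mathsf{SU}(N)$ denotes the group of $N\times N$ complex unitary matrices of determinant $1$. The $\mathsf{ABCD}$ problem: Alice is given $A,C\in\mathsf{SU}(N)$ explicitly and Bob is given $B,D\in\mathsf{SU}(N)$ explicitly; they must output $1$ (a \textsc{yes} instance) if $\mathrm{Tr}(ABCD)\ge 0.9N$ and $0$ (a \textsc{no} instance) if $\mathrm{Tr}(ABCD)\le 0.1N$, promised that one of these holds. One-clean-qubit (more generally $k$-clean-qubit) model of communication: the initial joint state consists of $k$ qubits in the state $\lvert 0\rangle$ ($k=1$ here) together with $m$ qubits, unentangled from these, in the maximally mixed state; the players have no other private memory. The players take turns applying unitary operators (depending on their own inputs) to all $m+k$ qubits and sending all of them to the other player. At the end an arbitrary projective measurement independent of the inputs is performed and its outcome is the output. The cost of the protocol is the number of rounds times $(m+k)$. *)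

theory Defs
  imports Complex_Main "Jordan_Normal_Form.Schur_Decomposition" "Jordan_Normal_Form.Determinant"
begin

definition mtrace :: "complex mat \<Rightarrow> complex" where
  "mtrace M = (\<Sum>i<dim_row M. M $$ (i,i))"

definition unitary_mat :: "nat \<Rightarrow> complex mat \<Rightarrow> bool" where
  "unitary_mat d U \<longleftrightarrow> U \<in> carrier_mat d d \<and> U * mat_adjoint U = 1\<^sub>m d"

definition SU :: "nat \<Rightarrow> complex mat set" where
  "SU d = {U. unitary_mat d U \<and> det U = 1}"

text \<open>Orthogonal projector on a d-dimensional space (the accepting projector of a
  two-outcome projective measurement).\<close>
definition projector_mat :: "nat \<Rightarrow> complex mat \<Rightarrow> bool" where
  "projector_mat d P \<longleftrightarrow> P \<in> carrier_mat d d \<and> P * P = P \<and> mat_adjoint P = P"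

text \<open>Register of k+m qubits; basis index i < 2^(k+m), the clean qubits are the most
  significant ones.  Initial state: clean qubits in |0>, the other m qubits maximally mixed,
  i.e. the density matrix |0..0><0..0| (x) I/2^m.\<close>
definition init_state :: "nat \<Rightarrow> nat \<Rightarrow> complex mat" where
  "init_state k m = mat (2^(k+m)) (2^(k+m))
      (\<lambda>(i,j). if i = j \<and> i < 2^m then 1 / of_nat (2^m) else 0)"

fun protocol_unitary ::
  "(nat \<Rightarrow> complex mat \<Rightarrow> complex mat \<Rightarrow> complex mat) \<Rightarrow>
   (nat \<Rightarrow> complex mat \<Rightarrow> complex mat \<Rightarrow> complex mat) \<Rightarrow>
   nat \<Rightarrow> nat \<Rightarrow> complex mat \<Rightarrow> complex mat \<Rightarrow> complex mat \<Rightarrow> complex mat \<Rightarrow> complex mat" where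
  "protocol_unitary Ua Ub d 0 A B C D = 1\<^sub>m d"
| "protocol_unitary Ua Ub d (Suc j) A B C D =
     (if even j then Ua j A C else Ub j B D) * protocol_unitary Ua Ub d j A B C D"

definition accept_prob ::
  "nat \<Rightarrow> nat \<Rightarrow> nat \<Rightarrow> (nat \<Rightarrow> complex mat \<Rightarrow> complex mat \<Rightarrow> complex mat) \<Rightarrow>
   (nat \<Rightarrow> complex mat \<Rightarrow> complex mat \<Rightarrow> complex mat) \<Rightarrow> complex mat \<Rightarrow>
   complex mat \<Rightarrow> complex mat \<Rightarrow> complex mat \<Rightarrow> complex mat \<Rightarrow> real" where
  "accept_prob k m r Ua Ub P A B C D =
     (let U = protocol_unitary Ua Ub (2^(k+m)) r A B C D
      in Re (mtrace (P * U * init_state k m * mat_adjoint U)))"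

definition valid_protocol ::
  "nat \<Rightarrow> nat \<Rightarrow> nat \<Rightarrow> nat \<Rightarrow> (nat \<Rightarrow> complex mat \<Rightarrow> complex mat \<Rightarrow> complex mat) \<Rightarrow>
   (nat \<Rightarrow> complex mat \<Rightarrow> complex mat \<Rightarrow> complex mat) \<Rightarrow> complex mat \<Rightarrow> bool" where
  "valid_protocol N k m r Ua Ub P \<longleftrightarrow>
     (\<forall>j<r. \<forall>X\<in>SU N. \<forall>Y\<in>SU N. unitary_mat (2^(k+m)) (Ua j X Y) \<and> unitary_mat (2^(k+m)) (Ub j X Y))
     \<and> projector_mat (2^(k+m)) P"

definition protocol_cost :: "nat \<Rightarrow> nat \<Rightarrow> nat \<Rightarrow> nat" where
  "protocol_cost k m r = r * (m + k)"

end

theory Submission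
  imports Defs
begin

lemma adj_dim[simp]: "dim_row (mat_adjoint A) = dim_col A" "dim_col (mat_adjoint A) = dim_row A"
  unfolding mat_adjoint_def by auto

lemma adj_index[simp]: "i < dim_col A \<Longrightarrow> j < dim_row A \<Longrightarrow> mat_adjoint A $$ (i,j) = cnj (A $$ (j,i))"
proof -
  assume i: "i < dim_col A" and j: "j < dim_row A"
  have "mat_adjoint A $$ (i,j) = map conjugate (cols A) ! i $ j"
    unfolding mat_adjoint_def using i j by (simp add: mat_of_rows_index)
  also have "\<dots> = conjugate (col A i) $ j" using i by simp
  also have "\<dots> = cnj (A $$ (j,i))" using i j by simp
  finally show ?thesis .
qed

lemma adj_carrier[simp]: "(A::complex mat) \<in> carrier_mat n m \<Longrightarrow> mat_adjoint A \<in> carrier_mat m n"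
proof -
  assume "A \<in> carrier_mat n m"
  then have "dim_row A = n" "dim_col A = m" by auto
  then show ?thesis by (intro carrier_matI) simp_all
qed

lemma adj_four_block:
  assumes "(A::complex mat) \<in> carrier_mat n n" "B \<in> carrier_mat n n" "C \<in> carrier_mat n n" "D \<in> carrier_mat n n"
  shows "mat_adjoint (four_block_mat A B C D) = four_block_mat (mat_adjoint A) (mat_adjoint C) (mat_adjoint B) (mat_adjoint D)"
  by (rule eq_matI, insert assms, auto)

lemma adj_smult[simp]: "mat_adjoint (c \<cdot>\<^sub>m (A::complex mat)) = cnj c \<cdot>\<^sub>m mat_adjoint A"
  by (rule eq_matI, auto)

lemma adj_one[simp]: "mat_adjoint (1\<^sub>m n :: complex mat) = 1\<^sub>m n"
  by (rule eq_matI, auto)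

lemma adj_zero[simp]: "mat_adjoint (0\<^sub>m n m :: complex mat) = 0\<^sub>m m n"
  by (rule eq_matI, auto)

lemma sum_split_nat: "(\<Sum>i<(n::nat)+m. f i) = (\<Sum>i<n. f i) + (\<Sum>i<m. f (n+i))"
  by (induction m) (auto simp: add.assoc)

lemma mtrace_four_block:
  assumes "A \<in> carrier_mat n n" "D \<in> carrier_mat n n"
  shows "mtrace (four_block_mat A B C D) = mtrace A + mtrace D"
  using assms by (simp add: mtrace_def sum_split_nat)

lemma mtrace_add: "A \<in> carrier_mat n n \<Longrightarrow> B \<in> carrier_mat n n \<Longrightarrow> mtrace (A + B) = mtrace A + mtrace B"
  by (simp add: mtrace_def sum.distrib)

lemma mtrace_smult: "A \<in> carrier_mat n n \<Longrightarrow> mtrace (c \<cdot>\<^sub>m A) = c * mtrace A"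
  by (auto simp: mtrace_def sum_distrib_left intro: sum.cong)

lemma mtrace_one: "mtrace (1\<^sub>m n) = of_nat n"
  by (simp add: mtrace_def)

lemma mtrace_adj: "A \<in> carrier_mat n n \<Longrightarrow> mtrace (mat_adjoint A) = cnj (mtrace A)"
  by (simp add: mtrace_def)

lemma sm1_left: "B \<in> carrier_mat n k \<Longrightarrow> (a \<cdot>\<^sub>m 1\<^sub>m n) * B = a \<cdot>\<^sub>m (B :: complex mat)"
proof -
  assume B: "B \<in> carrier_mat n k"
  have "(a \<cdot>\<^sub>m 1\<^sub>m n) * B = a \<cdot>\<^sub>m (1\<^sub>m n * B)" by (rule mult_smult_assoc_mat[OF one_carrier_mat B])
  also have "1\<^sub>m n * B = B" by (rule left_mult_one_mat[OF B])
  finally show ?thesis .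
qed
lemma sm1_right: "B \<in> carrier_mat k n \<Longrightarrow> B * (a \<cdot>\<^sub>m 1\<^sub>m n) = a \<cdot>\<^sub>m (B :: complex mat)"
proof -
  assume B: "B \<in> carrier_mat k n"
  have "B * (a \<cdot>\<^sub>m 1\<^sub>m n) = a \<cdot>\<^sub>m (B * 1\<^sub>m n)" by (rule mult_smult_distrib[OF B one_carrier_mat])
  also have "B * 1\<^sub>m n = B" by (rule right_mult_one_mat[OF B])
  finally show ?thesis .
qed
lemma smsm: "a \<cdot>\<^sub>m (b \<cdot>\<^sub>m A) = (a * b) \<cdot>\<^sub>m (A :: 'a::comm_ring_1 mat)"
  by (rule eq_matI, auto)
lemma smadd: "A \<in> carrier_mat n m \<Longrightarrow> a \<cdot>\<^sub>m A + b \<cdot>\<^sub>m A = (a + b) \<cdot>\<^sub>m (A :: 'a::comm_ring_1 mat)"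
  by (rule eq_matI, auto simp: algebra_simps)

definition ctrl :: "nat \<Rightarrow> complex mat \<Rightarrow> complex mat" where
  "ctrl N V = four_block_mat (1\<^sub>m N) (0\<^sub>m N N) (0\<^sub>m N N) V"
definition sH :: complex where "sH = of_real (sqrt (1/2))"
definition Hm :: "nat \<Rightarrow> complex mat" where
  "Hm N = four_block_mat (sH \<cdot>\<^sub>m 1\<^sub>m N) (sH \<cdot>\<^sub>m 1\<^sub>m N) (sH \<cdot>\<^sub>m 1\<^sub>m N) ((- sH) \<cdot>\<^sub>m 1\<^sub>m N)"
definition G :: "nat \<Rightarrow> complex mat \<Rightarrow> complex mat" where
  "G N V = four_block_mat (sH \<cdot>\<^sub>m 1\<^sub>m N) (sH \<cdot>\<^sub>m 1\<^sub>m N) (sH \<cdot>\<^sub>m V) ((- sH) \<cdot>\<^sub>m V)"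
definition Pm :: "nat \<Rightarrow> complex mat" where
  "Pm N = four_block_mat ((1/2) \<cdot>\<^sub>m 1\<^sub>m N) ((1/2) \<cdot>\<^sub>m 1\<^sub>m N) ((1/2) \<cdot>\<^sub>m 1\<^sub>m N) ((1/2) \<cdot>\<^sub>m 1\<^sub>m N)"
definition rho :: "nat \<Rightarrow> complex mat" where
  "rho N = four_block_mat ((1 / of_nat N) \<cdot>\<^sub>m 1\<^sub>m N) (0\<^sub>m N N) (0\<^sub>m N N) (0\<^sub>m N N)"

lemma sH_sq: "sH * sH = 1/2"
  proof -
  have "sH * sH = complex_of_real (sqrt (1/2) * sqrt (1/2))" unfolding sH_def by (rule of_real_mult[symmetric])
  also have "sqrt (1/2) * sqrt (1/2) = (1/2::real)" by simp
  finally show ?thesis by simp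
qed
lemma sH_cnj[simp]: "cnj sH = sH" unfolding sH_def by simp

lemma ctrl_carrier[simp]: "V \<in> carrier_mat N N \<Longrightarrow> ctrl N V \<in> carrier_mat (N+N) (N+N)"
  unfolding ctrl_def by auto
lemma G_carrier[simp]: "V \<in> carrier_mat N N \<Longrightarrow> G N V \<in> carrier_mat (N+N) (N+N)"
  unfolding G_def by auto
lemma Hm_carrier[simp]: "Hm N \<in> carrier_mat (N+N) (N+N)"
  unfolding Hm_def by auto
lemma Pm_carrier[simp]: "Pm N \<in> carrier_mat (N+N) (N+N)"
  unfolding Pm_def by auto
lemma rho_carrier[simp]: "rho N \<in> carrier_mat (N+N) (N+N)"
  unfolding rho_def by auto

lemma ctrl_mult: "X \<in> carrier_mat N N \<Longrightarrow> Y \<in> carrier_mat N N \<Longrightarrow> ctrl N X * ctrl N Y = ctrl N (X * Y)"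
  unfolding ctrl_def by (subst mult_four_block_mat[of _ N N]) auto

lemma ctrl_Hm: "X \<in> carrier_mat N N \<Longrightarrow> ctrl N X * Hm N = G N X"
  unfolding ctrl_def Hm_def G_def by (subst mult_four_block_mat[of _ N N]) (auto simp: sm1_left sm1_right)

lemma ctrl_G: "X \<in> carrier_mat N N \<Longrightarrow> Y \<in> carrier_mat N N \<Longrightarrow> ctrl N X * G N Y = G N (X * Y)"
  unfolding ctrl_def G_def by (subst mult_four_block_mat[of _ N N]) (auto simp: sm1_left sm1_right mult_smult_distrib)

lemma ctrl_adj: "V \<in> carrier_mat N N \<Longrightarrow> mat_adjoint (ctrl N V) = ctrl N (mat_adjoint V)"
  unfolding ctrl_def by (subst adj_four_block) auto

lemma ctrl_unitary: "unitary_mat N V \<Longrightarrow> unitary_mat (N+N) (ctrl N V)"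
proof -
  assume "unitary_mat N V"
  then have V: "V \<in> carrier_mat N N" and U: "V * mat_adjoint V = 1\<^sub>m N" unfolding unitary_mat_def by auto
  have "ctrl N V * mat_adjoint (ctrl N V) = ctrl N (V * mat_adjoint V)"
    using V by (simp add: ctrl_adj ctrl_mult)
  also have "\<dots> = 1\<^sub>m (N+N)" unfolding U ctrl_def by simp
  finally show ?thesis unfolding unitary_mat_def using V by simp
qed

lemma sm11: "(a \<cdot>\<^sub>m 1\<^sub>m N) * (b \<cdot>\<^sub>m 1\<^sub>m N) = (a * b) \<cdot>\<^sub>m (1\<^sub>m N :: complex mat)"
proof -
  have "b \<cdot>\<^sub>m 1\<^sub>m N \<in> carrier_mat N N" by simp
  from sm1_left[OF this, of a] show ?thesis by (simp add: smsm)
qed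
lemma sm1add: "(a \<cdot>\<^sub>m 1\<^sub>m N) + (b \<cdot>\<^sub>m 1\<^sub>m N) = (a + b) \<cdot>\<^sub>m (1\<^sub>m N :: complex mat)"
  by (rule smadd[of _ N N]) simp
lemma sm1_one: "(1::complex) \<cdot>\<^sub>m 1\<^sub>m N = 1\<^sub>m N"
  by (rule eq_matI) auto
lemma sm1_zero: "(0::complex) \<cdot>\<^sub>m 1\<^sub>m N = 0\<^sub>m N N"
  by (rule eq_matI) auto

lemma Hm_adj: "mat_adjoint (Hm N) = Hm N"
  unfolding Hm_def by (subst adj_four_block) auto

lemma Hm_unitary: "unitary_mat (N+N) (Hm N)"
proof -
  have c: "sH \<cdot>\<^sub>m 1\<^sub>m N \<in> carrier_mat N N" "(- sH) \<cdot>\<^sub>m 1\<^sub>m N \<in> carrier_mat N N" by simp_all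
  have "Hm N * Hm N = 1\<^sub>m (N+N)"
    unfolding Hm_def
    apply (subst mult_four_block_mat[OF c(1) c(1) c(1) c(2) c(1) c(1) c(1) c(2)])
    apply (simp_all only: smult_carrier_mat one_carrier_mat sm11 sm1add)
    apply (simp add: sH_sq sm1_one sm1_zero)
    done
  then show ?thesis unfolding unitary_mat_def Hm_adj by simp
qed

lemma Pm_proj: "projector_mat (N+N) (Pm N)"
proof -
  have c: "(1/2) \<cdot>\<^sub>m 1\<^sub>m N \<in> carrier_mat N N" by simp
  have "Pm N * Pm N = Pm N"
    unfolding Pm_def
    apply (subst mult_four_block_mat[OF c c c c c c c c])
    apply (simp_all only: smult_carrier_mat one_carrier_mat sm11 sm1add)
    apply simp
    done
  moreover have "mat_adjoint (Pm N) = Pm N"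
    unfolding Pm_def by (subst adj_four_block[of _ N]) auto
  ultimately show ?thesis unfolding projector_mat_def by simp
qed
lemma G_adj: "V \<in> carrier_mat N N \<Longrightarrow> mat_adjoint (G N V) =
   four_block_mat (sH \<cdot>\<^sub>m 1\<^sub>m N) (sH \<cdot>\<^sub>m mat_adjoint V) (sH \<cdot>\<^sub>m 1\<^sub>m N) ((- sH) \<cdot>\<^sub>m mat_adjoint V)"
  unfolding G_def by (subst adj_four_block) auto

lemma key:
  assumes V: "V \<in> carrier_mat N N" and U: "V * mat_adjoint V = 1\<^sub>m N" and N: "N > 0"
  shows "Re (mtrace (Pm N * G N V * rho N * mat_adjoint (G N V))) = 1/2 + Re (mtrace V) / (2 * real N)"
proof -
  define q :: complex where "q = 1 / of_nat N"
  define a where "a = sH * q"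
  define b where "b = sH * sH * q"
  have cs: "\<And>c. c \<cdot>\<^sub>m 1\<^sub>m N \<in> carrier_mat N N" by simp
  have cv: "\<And>c. c \<cdot>\<^sub>m V \<in> carrier_mat N N" using V by simp
  have aV: "mat_adjoint V \<in> carrier_mat N N" using V by simp
  have cav: "\<And>c. c \<cdot>\<^sub>m mat_adjoint V \<in> carrier_mat N N" using aV by simp
  have z: "(0\<^sub>m N N :: complex mat) \<in> carrier_mat N N" by simp
  have M1: "G N V * rho N = four_block_mat (a \<cdot>\<^sub>m 1\<^sub>m N) (0\<^sub>m N N) (a \<cdot>\<^sub>m V) (0\<^sub>m N N)"
    unfolding G_def rho_def q_def[symmetric]
    apply (subst mult_four_block_mat[OF cs cs cv cv cs z z z])
    apply (simp add: sm11 right_mult_zero_mat[OF cs] right_mult_zero_mat[OF cv] sm1_right[OF cv] smsm a_def mult.commute right_add_zero_mat[OF cv])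
    done
  have M2: "G N V * rho N * mat_adjoint (G N V) = four_block_mat (b \<cdot>\<^sub>m 1\<^sub>m N) (b \<cdot>\<^sub>m mat_adjoint V) (b \<cdot>\<^sub>m V) (b \<cdot>\<^sub>m 1\<^sub>m N)"
    unfolding M1 G_adj[OF V]
    apply (subst mult_four_block_mat[OF cs z cv z cs cav cs cav])
    apply (simp add: sm11 left_mult_zero_mat[OF cs] left_mult_zero_mat[OF cav] sm1_left[OF cav] sm1_right[OF cv]
       mult_smult_distrib[OF V aV] U smsm a_def b_def mult.commute mult.left_commute right_add_zero_mat[OF cs] right_add_zero_mat[OF cav] right_add_zero_mat[OF cv] mult_smult_assoc_mat[OF V cav])
    done
  have assoc: "Pm N * G N V * rho N * mat_adjoint (G N V) = Pm N * (G N V * rho N * mat_adjoint (G N V))"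
  proof -
    have g: "G N V \<in> carrier_mat (N+N) (N+N)" using V by simp
    have ga: "mat_adjoint (G N V) \<in> carrier_mat (N+N) (N+N)" using g by simp
    have "Pm N * G N V * rho N = Pm N * (G N V * rho N)"
      by (rule assoc_mult_mat[OF Pm_carrier g rho_carrier])
    then have "Pm N * G N V * rho N * mat_adjoint (G N V) = Pm N * (G N V * rho N) * mat_adjoint (G N V)" by simp
    also have "\<dots> = Pm N * (G N V * rho N * mat_adjoint (G N V))"
      by (rule assoc_mult_mat[OF Pm_carrier mult_carrier_mat[OF g rho_carrier] ga])
    finally show ?thesis .
  qed
  have P: "Pm N * (G N V * rho N * mat_adjoint (G N V)) =
     four_block_mat ((1/2) \<cdot>\<^sub>m (b \<cdot>\<^sub>m 1\<^sub>m N) + (1/2) \<cdot>\<^sub>m (b \<cdot>\<^sub>m V))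
                    ((1/2) \<cdot>\<^sub>m (b \<cdot>\<^sub>m mat_adjoint V) + (1/2) \<cdot>\<^sub>m (b \<cdot>\<^sub>m 1\<^sub>m N))
                    ((1/2) \<cdot>\<^sub>m (b \<cdot>\<^sub>m 1\<^sub>m N) + (1/2) \<cdot>\<^sub>m (b \<cdot>\<^sub>m V))
                    ((1/2) \<cdot>\<^sub>m (b \<cdot>\<^sub>m mat_adjoint V) + (1/2) \<cdot>\<^sub>m (b \<cdot>\<^sub>m 1\<^sub>m N))"
    unfolding M2 Pm_def
    apply (subst mult_four_block_mat[OF cs cs cs cs cs cav cv cs])
    apply (simp only: sm1_left[OF cs] sm1_left[OF cv] sm1_left[OF cav])
    done
  have T: "mtrace (Pm N * G N V * rho N * mat_adjoint (G N V)) =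
     (1/2) * (b * of_nat N) + (1/2) * (b * mtrace V) + ((1/2) * (b * cnj (mtrace V)) + (1/2) * (b * of_nat N))"
    unfolding assoc P
    apply (subst mtrace_four_block[of _ N])
      apply (simp add: cs cv cav)
     apply (simp add: cs cv cav)
    apply (subst mtrace_add[of _ N], simp add: cs cv cav, simp add: cs cv cav)+
    apply (simp add: mtrace_smult[OF cs] mtrace_smult[OF cv] mtrace_smult[OF cav] mtrace_smult[OF one_carrier_mat]
       mtrace_smult[OF V] mtrace_smult[OF aV] mtrace_one mtrace_adj[OF V])
    done
  have bv: "b = complex_of_real (1 / (2 * real N))"
    unfolding b_def q_def sH_sq by simp
  have "Re (mtrace (Pm N * G N V * rho N * mat_adjoint (G N V))) = 1 / (2 * real N) * real N + 1/(2 * real N) * Re (mtrace V)"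
    unfolding T bv by (simp add: field_simps)
  then show ?thesis using N by (simp add: field_simps)
qed
lemma adj_mult: "X \<in> carrier_mat n k \<Longrightarrow> Y \<in> carrier_mat k m \<Longrightarrow>
  mat_adjoint (X * Y) = mat_adjoint Y * mat_adjoint (X :: complex mat)"
  by (rule eq_matI) (auto simp: scalar_prod_def cnj_sum mult.commute intro: sum.cong)

lemma unit_mult: fixes X Y :: "complex mat" assumes X: "X \<in> carrier_mat N N" and Y: "Y \<in> carrier_mat N N"
  and UX: "X * mat_adjoint X = 1\<^sub>m N" and UY: "Y * mat_adjoint Y = 1\<^sub>m N"
  shows "(X * Y) * mat_adjoint (X * Y) = 1\<^sub>m N"
proof -
  have aX: "mat_adjoint X \<in> carrier_mat N N" using X by simp
  have aY: "mat_adjoint Y \<in> carrier_mat N N" using Y by simp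
  have "(X * Y) * mat_adjoint (X * Y) = (X * Y) * (mat_adjoint Y * mat_adjoint X)"
    using adj_mult[OF X Y] by simp
  also have "\<dots> = X * (Y * (mat_adjoint Y * mat_adjoint X))"
    by (rule assoc_mult_mat[OF X Y mult_carrier_mat[OF aY aX]])
  also have "Y * (mat_adjoint Y * mat_adjoint X) = (Y * mat_adjoint Y) * mat_adjoint X"
    by (rule assoc_mult_mat[OF Y aY aX, symmetric])
  also have "\<dots> = mat_adjoint X" unfolding UY by (rule left_mult_one_mat[OF aX])
  finally show ?thesis using UX by simp
qed

lemma init_rho: "init_state 1 n = rho (2^n)"
  unfolding init_state_def rho_def by (rule eq_matI) auto

lemma dim2: "(2::nat)^(1+n) = 2^n + 2^n" by simp

lemma su_unit: "V \<in> SU N \<Longrightarrow> V \<in> carrier_mat N N \<and> V * mat_adjoint V = 1\<^sub>m N \<and> unitary_mat N V"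
  unfolding SU_def unitary_mat_def by auto

theorem theorem4p1:
  "\<exists>c::real. \<forall>n::nat. n \<ge> 1 \<longrightarrow>
     (\<exists>m r Ua Ub P.
        valid_protocol (2^n) 1 m r Ua Ub P \<and>
        real (protocol_cost 1 m r) \<le> c * log 2 (real (2^n)) \<and>
        (\<forall>A\<in>SU (2^n). \<forall>B\<in>SU (2^n). \<forall>C\<in>SU (2^n). \<forall>D\<in>SU (2^n).
           (Re (mtrace (A * B * C * D)) \<ge> 0.9 * real (2^n) \<longrightarrow>
              accept_prob 1 m r Ua Ub P A B C D \<ge> 0.95) \<and>
           (Re (mtrace (A * B * C * D)) \<le> 0.1 * real (2^n) \<longrightarrow>
              accept_prob 1 m r Ua Ub P A B C D \<le> 0.55)))"
proof (rule exI[of _ 10], intro allI impI)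
  fix n :: nat assume n: "n \<ge> 1"
  define N :: nat where "N = 2^n"
  have Npos: "N > 0" unfolding N_def by simp
  define Ua where "Ua = (\<lambda>(j::nat) X Y. if j = 0 then Hm N else if j = 2 then ctrl N Y else ctrl N X)"
  define Ub where "Ub = (\<lambda>(j::nat) X Y. if j = 1 then ctrl N Y else ctrl N X)"
  have d: "(2::nat)^(1+n) = N + N" unfolding N_def by simp
  have valid: "valid_protocol (2^n) 1 n 5 Ua Ub (Pm N)"
    unfolding valid_protocol_def d N_def[symmetric]
    using su_unit ctrl_unitary Hm_unitary Pm_proj by (auto simp: Ua_def Ub_def)
  have cost: "real (protocol_cost 1 n 5) \<le> 10 * log 2 (real (2^n))"
    using n by (simp add: protocol_cost_def log_nat_power)
  have acc: "accept_prob 1 n 5 Ua Ub (Pm N) A B C D = 1/2 + Re (mtrace (A * B * C * D)) / (2 * real N)"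
    if A: "A \<in> SU N" and B: "B \<in> SU N" and C: "C \<in> SU N" and D: "D \<in> SU N" for A B C D
  proof -
    note a = su_unit[OF A] and b = su_unit[OF B] and c = su_unit[OF C] and dd = su_unit[OF D]
    have pu: "protocol_unitary Ua Ub (2^(1+n)) 5 A B C D = G N (A * B * C * D)"
    proof -
      have cA: "A \<in> carrier_mat N N" and cB: "B \<in> carrier_mat N N" and cC: "C \<in> carrier_mat N N"
        and cD: "D \<in> carrier_mat N N" using a b c dd by auto
      have five: "(5::nat) = Suc (Suc (Suc (Suc (Suc 0))))" by simp
      have "protocol_unitary Ua Ub (N+N) 5 A B C D = ctrl N A * (ctrl N B * (ctrl N C * (ctrl N D * (Hm N * 1\<^sub>m (N+N)))))"
        unfolding five by (simp add: Ua_def Ub_def)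
      also have "Hm N * 1\<^sub>m (N+N) = Hm N" by (rule right_mult_one_mat[OF Hm_carrier])
      also have "ctrl N D * Hm N = G N D" by (rule ctrl_Hm[OF cD])
      also have "ctrl N C * G N D = G N (C * D)" by (rule ctrl_G[OF cC cD])
      also have "ctrl N B * G N (C * D) = G N (B * (C * D))" by (rule ctrl_G[OF cB mult_carrier_mat[OF cC cD]])
      also have "ctrl N A * G N (B * (C * D)) = G N (A * (B * (C * D)))"
        by (rule ctrl_G[OF cA mult_carrier_mat[OF cB mult_carrier_mat[OF cC cD]]])
      also have "A * (B * (C * D)) = A * B * C * D"
        using cA cB cC cD by (simp add: assoc_mult_mat[of _ N N _ N _ N])
      finally show ?thesis unfolding d .
    qed
    have V: "A * B * C * D \<in> carrier_mat N N" using a b c dd by auto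
    have VU: "(A * B * C * D) * mat_adjoint (A * B * C * D) = 1\<^sub>m N"
      using a b c dd by (meson unit_mult mult_carrier_mat)
    show ?thesis unfolding accept_prob_def Let_def pu init_rho N_def[symmetric]
      by (rule key[OF V VU Npos])
  qed
  have main: "\<forall>A\<in>SU N. \<forall>B\<in>SU N. \<forall>C\<in>SU N. \<forall>D\<in>SU N.
     (Re (mtrace (A * B * C * D)) \<ge> 0.9 * real N \<longrightarrow> accept_prob 1 n 5 Ua Ub (Pm N) A B C D \<ge> 0.95) \<and>
     (Re (mtrace (A * B * C * D)) \<le> 0.1 * real N \<longrightarrow> accept_prob 1 n 5 Ua Ub (Pm N) A B C D \<le> 0.55)"
  proof (intro ballI)
    fix A B C D assume A: "A \<in> SU N" and B: "B \<in> SU N" and C: "C \<in> SU N" and D: "D \<in> SU N"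
    define t where "t = Re (mtrace (A * B * C * D))"
    have e: "accept_prob 1 n 5 Ua Ub (Pm N) A B C D = 1/2 + t / (2 * real N)"
      unfolding t_def by (rule acc[OF A B C D])
    have RN: "real N > 0" using Npos by simp
    have y: "t / (2 * real N) \<ge> 0.45" if "t \<ge> 0.9 * real N"
      using that RN by (simp add: field_simps)
    have no: "t / (2 * real N) \<le> 0.05" if "t \<le> 0.1 * real N"
      using that RN by (simp add: field_simps)
    show "(Re (mtrace (A * B * C * D)) \<ge> 0.9 * real N \<longrightarrow> accept_prob 1 n 5 Ua Ub (Pm N) A B C D \<ge> 0.95) \<and>
          (Re (mtrace (A * B * C * D)) \<le> 0.1 * real N \<longrightarrow> accept_prob 1 n 5 Ua Ub (Pm N) A B C D \<le> 0.55)"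
      unfolding e t_def[symmetric] using y no by auto
  qed
  show "\<exists>m r Ua Ub P.
        valid_protocol (2^n) 1 m r Ua Ub P \<and>
        real (protocol_cost 1 m r) \<le> 10 * log 2 (real (2^n)) \<and>
        (\<forall>A\<in>SU (2^n). \<forall>B\<in>SU (2^n). \<forall>C\<in>SU (2^n). \<forall>D\<in>SU (2^n).
           (Re (mtrace (A * B * C * D)) \<ge> 0.9 * real (2^n) \<longrightarrow>
              accept_prob 1 m r Ua Ub P A B C D \<ge> 0.95) \<and>
           (Re (mtrace (A * B * C * D)) \<le> 0.1 * real (2^n) \<longrightarrow>
              accept_prob 1 m r Ua Ub P A B C D \<le> 0.55))"
    using valid cost main unfolding N_def by blast
qed
end
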